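(* There does not exist any GRLOWJFA that accepts the language $\{a^nb^n : n\ge 0\}$.
   Context: "Subword" means a contiguous factor. A GRLOWJFA is a tuple $\mathcal{A}=(\Sigma,Q,q_0,F,R)$ with $\Sigma$ a finite alphabet, $Q$ a finite state set, $q_0\in Q$, $F\subseteq Q$, and $R\subset Q\times\Sigma^+\times Q$ a finite set of rules such that for each $p\in Q$, $w\in\Sigma^+$ at most one $q$ has $(p,w,q)\in R$ (meaning: go from $p$ to $q$ deleting $w$). $\Sigma_p=\{w:(p,w,q)\in R\text{ for some }q\}$. Configurations lie in $\Sigma^*Q\Sigma^*$. Moves $\curvearrowright$: (1) for $t,u,v\in\Sigma^*$ and $(p,x,q)\in R$: $tpuxv\curvearrowright tuqv$ provided $u$ contains no word of $\Sigma_p$ as a subword and there are no $u_1,x_2\in\Sigma^*$, $u_2,x_1\in\Sigma^+$ with $u=u_1u_2$, $x=x_1x_2$, $u_2x_1=x$; (2) for $x\in\Sigma^+$, $y\in\Sigma^*$ with $y$ containing no word of $\Sigma_p$ as a subword: $xpy\curvearrowright pxy$. The accepted language is $L_{GRL}(\mathcal{A})=\{w\in\Sigma^*: q_0w\curvearrowright^* q_f \text{ for some } q_f\in F\}$. *)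

theory Defs
  imports Main "HOL-Library.Sublist"
begin

text \<open>A GRLOWJFA (Sigma, Q, q0, F, R). Rules (p, w, q) mean: go from p to q deleting w.
  Configurations t p u (in Sigma* Q Sigma*) are represented as triples (t, p, u).\<close>

definition is_GRLOWJFA ::
  "'a set \<Rightarrow> 'q set \<Rightarrow> 'q \<Rightarrow> 'q set \<Rightarrow> ('q \<times> 'a list \<times> 'q) set \<Rightarrow> bool" where
  "is_GRLOWJFA Sig Q q0 F R \<longleftrightarrow>
     finite Sig \<and> finite Q \<and> q0 \<in> Q \<and> F \<subseteq> Q \<and> finite R \<and>
     (\<forall>(p, w, q) \<in> R. p \<in> Q \<and> q \<in> Q \<and> w \<noteq> [] \<and> w \<in> lists Sig) \<and>
     (\<forall>p w q q'. (p, w, q) \<in> R \<longrightarrow> (p, w, q') \<in> R \<longrightarrow> q = q')"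

definition Sigma_p :: "('q \<times> 'a list \<times> 'q) set \<Rightarrow> 'q \<Rightarrow> 'a list set" where
  "Sigma_p R p = {w. \<exists>q. (p, w, q) \<in> R}"

definition no_rule_word :: "('q \<times> 'a list \<times> 'q) set \<Rightarrow> 'q \<Rightarrow> 'a list \<Rightarrow> bool" where
  "no_rule_word R p u \<longleftrightarrow> (\<forall>w \<in> Sigma_p R p. \<not> sublist w u)"

inductive grl_move :: "('q \<times> 'a list \<times> 'q) set \<Rightarrow> 'a list \<times> 'q \<times> 'a list \<Rightarrow> 'a list \<times> 'q \<times> 'a list \<Rightarrow> bool"
  for R where
  delete: "\<lbrakk> (p, x, q) \<in> R; no_rule_word R p u;
            \<not> (\<exists>u1 u2 x1 x2. u = u1 @ u2 \<and> x = x1 @ x2 \<and> u2 \<noteq> [] \<and> x1 \<noteq> [] \<and> u2 @ x1 = x) \<rbrakk>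
           \<Longrightarrow> grl_move R (t, p, u @ x @ v) (t @ u, q, v)"
| jump: "\<lbrakk> x \<noteq> []; no_rule_word R p y \<rbrakk> \<Longrightarrow> grl_move R (x, p, y) ([], p, x @ y)"

definition L_GRL :: "'a set \<Rightarrow> 'q \<Rightarrow> 'q set \<Rightarrow> ('q \<times> 'a list \<times> 'q) set \<Rightarrow> 'a list set" where
  "L_GRL Sig q0 F R = {w \<in> lists Sig. \<exists>qf \<in> F. (grl_move R)\<^sup>*\<^sup>* ([], q0, w) ([], qf, [])}"

end

theory Submission
  imports Defs
begin

inductive pd :: "('q \<times> 'a list \<times> 'q) set \<Rightarrow> 'q \<Rightarrow> 'a list \<Rightarrow> 'q \<Rightarrow> bool"
  for R where
  pd_nil: "pd R p [] p"
| pd_step: "(p, x, q) \<in> R \<Longrightarrow> pd R q X r \<Longrightarrow> pd R p (x @ X) r"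

lemma pd_app: "pd R p X q \<Longrightarrow> pd R q Y r \<Longrightarrow> pd R p (X @ Y) r"
  by (induction rule: pd.induct) (auto intro: pd.intros)

lemma pd_lists: "pd R p X q \<Longrightarrow> \<forall>(p, x, q) \<in> R. x \<in> lists Sig \<Longrightarrow> X \<in> lists Sig"
  by (induction rule: pd.induct) auto

lemma pd_state: "pd R p X q \<Longrightarrow> p \<in> Q \<Longrightarrow> \<forall>(p, x, q) \<in> R. q \<in> Q \<Longrightarrow> q \<in> Q"
  by (induction rule: pd.induct) auto

lemma pd_run:
  assumes "pd R p X q" "\<forall>(p, x, q) \<in> R. x \<noteq> []"
  shows "(grl_move R)\<^sup>*\<^sup>* ([], p, X) ([], q, [])"
  using assms
proof (induction rule: pd.induct)
  case (pd_nil p)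
  then show ?case by simp
next
  case (pd_step p x q X r)
  have nr: "no_rule_word R p []"
    using pd_step.prems unfolding no_rule_word_def Sigma_p_def by auto
  have "grl_move R ([], p, [] @ x @ X) ([] @ [], q, X)"
    by (rule grl_move.delete[OF pd_step.hyps(1) nr]) auto
  then have "grl_move R ([], p, x @ X) ([], q, X)" by simp
  then show ?case using pd_step.IH pd_step.prems
    by (meson converse_rtranclp_into_rtranclp)
qed

lemma run_to_pd:
  assumes "(grl_move R)\<^sup>*\<^sup>* c c'" "c' = ([], qf, [])"
  shows "case c of (t, p, u) \<Rightarrow> \<exists>X. pd R p X qf \<and> length X = length t + length u"
  using assms
proof (induction rule: converse_rtranclp_induct)
  case base
  then show ?case by (auto intro: pd.intros)
next
  case (step y z)
  from step.hyps(1) show ?case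
  proof (cases rule: grl_move.cases)
    case (delete p x q u t v)
    with step.IH step.prems obtain X where "pd R q X qf" "length X = length (t @ u) + length v"
      by auto
    then show ?thesis using delete by (auto intro!: exI[of _ "x @ X"] intro: pd.intros)
  next
    case (jump x p y')
    with step.IH step.prems show ?thesis by auto
  qed
qed

lemma rep_eq:
  assumes "replicate i a @ replicate j b = replicate n a @ replicate n b" "a \<noteq> b"
  shows "i = n \<and> j = n"
proof -
  have "filter (\<lambda>c. c = a) (replicate i a @ replicate j b) = filter (\<lambda>c. c = a) (replicate n a @ replicate n b)"
    using assms(1) by simp
  then have 1: "i = n" using assms(2) by (simp add: filter_replicate)
  have "filter (\<lambda>c. c = b) (replicate i a @ replicate j b) = filter (\<lambda>c. c = b) (replicate n a @ replicate n b)"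
    using assms(1) by simp
  then have "j = n" using assms(2) by (simp add: filter_replicate)
  with 1 show ?thesis by simp
qed

lemma pd_split:
  assumes "pd R p Z q" "\<forall>(p, x, q) \<in> R. length x \<le> m" "0 < m" "Z = replicate N a @ Y"
  shows "\<exists>s r. s \<le> N \<and> N - s < m \<and> pd R p (replicate s a) r \<and> pd R r (replicate (N - s) a @ Y) q"
  using assms
proof (induction arbitrary: N rule: pd.induct)
  case (pd_nil p)
  then show ?case by (auto intro: pd.intros)
next
  case (pd_step p x q X r)
  show ?case
  proof (cases "N < m")
    case True
    have "pd R p (replicate N a @ Y) r"
      using pd.pd_step[OF pd_step.hyps(1,2)] pd_step.prems(3) by simp
    then show ?thesis using True by (intro exI[of _ 0] exI[of _ p]) (auto intro: pd.pd_nil)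
  next
    case False
    have lx: "length x \<le> N" using pd_step.prems(1) pd_step.hyps(1) False by auto
    have "x @ X = replicate (length x) a @ replicate (N - length x) a @ Y"
      using pd_step.prems(3) lx by (simp add: replicate_add[symmetric])
    then have xe: "x = replicate (length x) a" and Xe: "X = replicate (N - length x) a @ Y"
      by (simp_all add: append_eq_append_conv)
    obtain s r' where s: "s \<le> N - length x" "N - length x - s < m"
      "pd R q (replicate s a) r'" "pd R r' (replicate (N - length x - s) a @ Y) r"
      using pd_step.IH[OF pd_step.prems(1,2) Xe] by blast
    have "pd R p (x @ replicate s a) r'" using pd_step.hyps(1) s(3) by (rule pd.pd_step)
    then have "pd R p (replicate (length x + s) a) r'"
      using xe by (metis replicate_add)
    moreover have "N - (length x + s) = N - length x - s" by simp
    ultimately show ?thesis using s lx by (intro exI[of _ "length x + s"] exI[of _ r']) auto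
  qed
qed

definition goodP where
  "goodP R Q F m q0 a b N y \<longleftrightarrow> (case y of (r, k, qf) \<Rightarrow> r \<in> Q \<and> k < m \<and> qf \<in> F \<and> k \<le> N \<and>
        pd R q0 (replicate (N - k) a) r \<and> pd R r (replicate k a @ replicate N b) qf)"

theorem lemma9:
  fixes a b :: 'a
  assumes "a \<noteq> b"
  shows "\<not> (\<exists>(Sig :: 'a set) (Q :: 'q set) q0 F R.
            is_GRLOWJFA Sig Q q0 F R \<and> a \<in> Sig \<and> b \<in> Sig \<and>
            L_GRL Sig q0 F R = {replicate n a @ replicate n b | n. True})"
proof
  assume "\<exists>(Sig :: 'a set) (Q :: 'q set) q0 F R.
            is_GRLOWJFA Sig Q q0 F R \<and> a \<in> Sig \<and> b \<in> Sig \<and>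
            L_GRL Sig q0 F R = {replicate n a @ replicate n b | n. True}"
  then obtain Sig and Q :: "'q set" and q0 F R where
    G: "is_GRLOWJFA Sig Q q0 F R" and ab: "a \<in> Sig" "b \<in> Sig" and
    L: "L_GRL Sig q0 F R = {replicate n a @ replicate n b | n. True}"
    by blast
  from G have finR: "finite R" and finQ: "finite Q" and q0Q: "q0 \<in> Q" and FQ: "F \<subseteq> Q"
    and rules: "\<forall>(p, w, q) \<in> R. p \<in> Q \<and> q \<in> Q \<and> w \<noteq> [] \<and> w \<in> lists Sig"
    unfolding is_GRLOWJFA_def by auto
  have ne: "\<forall>(p, x, q) \<in> R. x \<noteq> []" using rules by auto
  have ls: "\<forall>(p, x, q) \<in> R. x \<in> lists Sig" using rules by auto
  have tQ: "\<forall>(p, x, q) \<in> R. q \<in> Q" using rules by auto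
  define m where "m = Suc (Max ((\<lambda>(p, x, q). length x) ` R))"
  have m0: "0 < m" unfolding m_def by simp
  have mb: "\<forall>(p, x, q) \<in> R. length x \<le> m"
  proof (intro ballI, clarify)
    fix p x q assume "(p, x, q) \<in> R"
    then have "length x \<le> Max ((\<lambda>(p, x, q). length x) ` R)"
      using finR by (intro Max_ge) force+
    then show "length x \<le> m" unfolding m_def by simp
  qed
  have acc: "w \<in> L_GRL Sig q0 F R" if "pd R q0 w qf" "qf \<in> F" for w qf
    using that pd_run[OF that(1) ne] pd_lists[OF that(1) ls] unfolding L_GRL_def by blast
  have key: "\<exists>y. goodP R Q F m q0 a b N y" for N
  proof -
    have "replicate N a @ replicate N b \<in> L_GRL Sig q0 F R" using L by blast
    then obtain qf where qf: "qf \<in> F"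
      "(grl_move R)\<^sup>*\<^sup>* ([], q0, replicate N a @ replicate N b) ([], qf, [])"
      unfolding L_GRL_def by blast
    obtain X where X: "pd R q0 X qf" "length X = N + N"
      using run_to_pd[OF qf(2) refl] by auto
    have "X \<in> L_GRL Sig q0 F R" using acc[OF X(1) qf(1)] .
    then obtain n where n: "X = replicate n a @ replicate n b" using L by blast
    with X(2) have "n = N" by simp
    with n X(1) have P: "pd R q0 (replicate N a @ replicate N b) qf" by simp
    obtain s r where s: "s \<le> N" "N - s < m" "pd R q0 (replicate s a) r"
      "pd R r (replicate (N - s) a @ replicate N b) qf"
      using pd_split[OF P mb m0 refl] by blast
    have rQ: "r \<in> Q" using pd_state[OF s(3) q0Q tQ] .
    have e: "N - (N - s) = s" using s(1) by simp
    have "goodP R Q F m q0 a b N (r, N - s, qf)"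
      unfolding goodP_def using rQ s qf(1) e by simp
    then show ?thesis by blast
  qed
  obtain g where g: "\<And>N. goodP R Q F m q0 a b N (g N)"
  proof -
    have "\<forall>N. \<exists>y. goodP R Q F m q0 a b N y" using key by blast
    then have "\<exists>g. \<forall>N. goodP R Q F m q0 a b N (g N)" by (rule choice)
    then show ?thesis using that by blast
  qed
  have "g N \<in> Q \<times> {..<m} \<times> F" for N
    using g[of N] unfolding goodP_def by (cases "g N") auto
  then have "g ` UNIV \<subseteq> Q \<times> {..<m} \<times> F" by blast
  moreover have "finite (Q \<times> {..<m} \<times> F)" using finQ finite_subset[OF FQ finQ] by simp
  ultimately have "finite (g ` UNIV)" by (rule finite_subset)
  then have "\<not> inj g"
  proof (intro notI)
    assume fi: "finite (g ` UNIV)" and "inj g"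
    then have "finite (UNIV :: nat set)" using finite_imageD[OF fi] by simp
    then show False by simp
  qed
  then obtain N1 N2 where N12: "N1 \<noteq> N2" "g N1 = g N2" unfolding inj_def by blast
  obtain r k qf where gN: "g N1 = (r, k, qf)" by (cases "g N1") auto
  have h1: "pd R r (replicate k a @ replicate N1 b) qf" "qf \<in> F"
    using g[of N1] gN unfolding goodP_def by auto
  have h2: "pd R q0 (replicate (N2 - k) a) r" "k \<le> N2"
    using g[of N2] gN N12(2) unfolding goodP_def by auto
  have "pd R q0 (replicate (N2 - k) a @ replicate k a @ replicate N1 b) qf"
    using pd_app[OF h2(1) h1(1)] .
  moreover have "replicate (N2 - k) a @ replicate k a = replicate N2 a"
    using h2(2) by (simp add: replicate_add[symmetric])
  ultimately have "pd R q0 (replicate N2 a @ replicate N1 b) qf"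
    by (simp only: append_assoc[symmetric])
  then have "replicate N2 a @ replicate N1 b \<in> L_GRL Sig q0 F R" by (rule acc) (rule h1(2))
  then obtain n where "replicate N2 a @ replicate N1 b = replicate n a @ replicate n b" using L by auto
  then have "N2 = n \<and> N1 = n" by (rule rep_eq[OF _ assms])
  with N12(1) show False by simp
qed

end
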